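(* Let $\alpha\in(0,1)$ and $d\ge2$. There exists a continuous function $f:[0,\infty)\times\mathbb{R}^d\to\mathbb{R}^d$, globally Lipschitz in $x$, such that for the system ${}^{C}D^\alpha_{0+}x(t)=f(t,x(t))$, $t\ge0$, there is no two-parameter flow $(\phi_{s,t})_{s,t\ge0}$ in $\mathbb{R}^d$ whose maps $\phi_{0,t}$ coincide with the evolution mappings of the system for all $t\ge0$.
   Context: ${}^{C}D^\alpha_{0+}$ is the Caputo fractional derivative of order $\alpha$, applied componentwise; a solution is a continuous $x:[0,\infty)\to\mathbb{R}^d$ with $x(t)=x(0)+\frac{1}{\Gamma(\alpha)}\int_0^t(t-\tau)^{\alpha-1}f(\tau,x(\tau))\,d\tau$; under the Lipschitz condition each initial value gives a unique solution. The evolution mapping $\phi_{0,t}:\mathbb{R}^d\to\mathbb{R}^d$ sends $x_0$ to $x(t)$ where $x(\cdot)$ is the solution with $x(0)=x_0$. A two-parameter flow in $\mathbb{R}^d$ is a family $\phi_{s,t}:\mathbb{R}^d\to\mathbb{R}^d$, $s,t\ge0$, such that $(s,t,x)\mapsto\phi_{s,t}(x)$ is continuous, each $\phi_{s,t}$ is a homeomorphism of $\mathbb{R}^d$, and $\phi_{s,t}\circ\phi_{u,s}=\phi_{u,t}$ for all $u,s,t\ge0$. *)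

theory Defs
  imports "HOL-Analysis.Analysis"
begin

text \<open>Solution of the Caputo system  D^alpha x(t) = f(t, x(t)), t >= 0, in the sense of
  the equivalent Volterra integral equation
  x(t) = x(0) + 1/Gamma(alpha) * integral_0^t (t - tau)^(alpha-1) f(tau, x(tau)) dtau.\<close>
definition caputo_solution ::
  "real \<Rightarrow> (real \<Rightarrow> 'a::euclidean_space \<Rightarrow> 'a) \<Rightarrow> (real \<Rightarrow> 'a) \<Rightarrow> bool" where
  "caputo_solution \<alpha> f x \<longleftrightarrow>
     continuous_on {0..} x \<and>
     (\<forall>t\<ge>0. ((\<lambda>\<tau>. ((t - \<tau>) powr (\<alpha> - 1) / Gamma \<alpha>) *\<^sub>R f \<tau> (x \<tau>))
                 has_integral (x t - x 0)) {0..t})"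

definition evolution_map ::
  "real \<Rightarrow> (real \<Rightarrow> 'a::euclidean_space \<Rightarrow> 'a) \<Rightarrow> real \<Rightarrow> 'a \<Rightarrow> 'a" where
  "evolution_map \<alpha> f t x0 = (THE y. \<exists>x. caputo_solution \<alpha> f x \<and> x 0 = x0 \<and> x t = y)"

definition two_param_flow :: "(real \<Rightarrow> real \<Rightarrow> 'a::topological_space \<Rightarrow> 'a) \<Rightarrow> bool" where
  "two_param_flow \<phi> \<longleftrightarrow>
     continuous_on ({0..} \<times> {0..} \<times> UNIV) (\<lambda>(s, t, x). \<phi> s t x) \<and>
     (\<forall>s\<ge>0. \<forall>t\<ge>0. \<exists>g. homeomorphism UNIV UNIV (\<phi> s t) g) \<and>
     (\<forall>u\<ge>0. \<forall>s\<ge>0. \<forall>t\<ge>0. \<phi> s t \<circ> \<phi> u s = \<phi> u t)"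

end

theory Submission imports Defs begin

lemma kern_int:
  fixes \<alpha> a b t :: real
  assumes "0 < \<alpha>" "a \<le> b" "b \<le> t"
  shows "((\<lambda>s. (t - s) powr (\<alpha> - 1)) has_integral ((t-a) powr \<alpha> - (t-b) powr \<alpha>)/\<alpha>) {a..b}"
proof -
  have "((\<lambda>s. (t - s) powr (\<alpha> - 1)) has_integral ((\<lambda>s. - ((t-s) powr \<alpha>) / \<alpha>) b - (\<lambda>s. - ((t-s) powr \<alpha>) / \<alpha>) a)) {a..b}"
  proof (rule fundamental_theorem_of_calculus_interior[OF assms(2)])
    show "continuous_on {a..b} (\<lambda>s. - ((t - s) powr \<alpha>) / \<alpha>)"
      using assms by (intro continuous_intros continuous_on_powr') auto
  next
    fix x assume x: "x \<in> {a<..<b}"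
    then have "t - x > 0" using assms by auto
    show "((\<lambda>s. - ((t - s) powr \<alpha>) / \<alpha>) has_vector_derivative (t - x) powr (\<alpha> - 1)) (at x)"
      unfolding has_real_derivative_iff_has_vector_derivative[symmetric]
      using \<open>t - x > 0\<close> assms(1)
      by (auto intro!: derivative_eq_intros)
  qed
  then show ?thesis by (simp add: diff_divide_distrib)
qed


lemma kern_nonneg_int:
  fixes \<alpha> a b t :: real
  assumes "0 < \<alpha>" "a \<le> b" "b \<le> t"
  shows "(\<lambda>s. (t - s) powr (\<alpha> - 1)) absolutely_integrable_on {a..b}"
  using kern_int[OF assms] by (intro nonnegative_absolutely_integrable_1) auto

lemma kern_prod_integrable:
  fixes \<alpha> a b t :: real
  assumes "0 < \<alpha>" "a \<le> b" "b \<le> t" "continuous_on {a..b} h"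
  shows "(\<lambda>s. (t - s) powr (\<alpha> - 1) * h s) integrable_on {a..b}"
proof -
  have "(\<lambda>s. h s * (t - s) powr (\<alpha> - 1)) absolutely_integrable_on {a..b}"
    by (rule absolutely_integrable_bounded_measurable_product_real[OF
          continuous_imp_measurable_on_sets_lebesgue[OF assms(4)] _ _ kern_nonneg_int[OF assms(1-3)]])
       (auto intro!: compact_imp_bounded compact_continuous_image assms(4))
  then show ?thesis
    by (simp add: absolutely_integrable_on_def mult.commute)
qed


definition FI :: "real \<Rightarrow> (real \<Rightarrow> real) \<Rightarrow> real \<Rightarrow> real" where
  "FI \<alpha> h t = integral {0..t} (\<lambda>s. (t - s) powr (\<alpha> - 1) * h s)"

lemma FI_holder:
  fixes \<alpha> t t' M :: real
  assumes a: "0 < \<alpha>" "\<alpha> \<le> 1" and hc: "continuous_on {0..} h" and hM: "\<And>s. s \<ge> 0 \<Longrightarrow> \<bar>h s\<bar> \<le> M"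
    and tt: "0 \<le> t" "t \<le> t'"
  shows "\<bar>FI \<alpha> h t' - FI \<alpha> h t\<bar> \<le> 2 * M * (t' - t) powr \<alpha> / \<alpha>"
proof -
  define k where "k = (\<lambda>t s. (t - s) powr (\<alpha> - 1 :: real))"
  have hcI: "continuous_on {a..b} h" if "0 \<le> a" for a b
    by (rule continuous_on_subset[OF hc]) (use that in auto)
  have i1: "(\<lambda>s. k t' s * h s) integrable_on {0..t'}"
    unfolding k_def using tt a by (intro kern_prod_integrable hcI) auto
  have i2: "(\<lambda>s. k t' s * h s) integrable_on {0..t}"
    unfolding k_def using tt a by (intro kern_prod_integrable hcI) auto
  have i3: "(\<lambda>s. k t' s * h s) integrable_on {t..t'}"
    unfolding k_def using tt a by (intro kern_prod_integrable hcI) auto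
  have i4: "(\<lambda>s. k t s * h s) integrable_on {0..t}"
    unfolding k_def using tt a by (intro kern_prod_integrable hcI) auto
  have split: "FI \<alpha> h t' = integral {0..t} (\<lambda>s. k t' s * h s) + integral {t..t'} (\<lambda>s. k t' s * h s)"
    unfolding FI_def k_def using Henstock_Kurzweil_Integration.integral_combine[OF tt i1[unfolded k_def]] by simp
  have kt'_int: "((\<lambda>s. M * k t' s) has_integral M * ((t' - t) powr \<alpha> / \<alpha>)) {t..t'}"
    using has_integral_mult_right[OF kern_int[OF a(1) tt(2) order_refl]] unfolding k_def by simp
  have e1: "\<bar>integral {t..t'} (\<lambda>s. k t' s * h s)\<bar> \<le> M * ((t' - t) powr \<alpha> / \<alpha>)"
  proof -
    have "norm (integral {t..t'} (\<lambda>s. k t' s * h s)) \<le> integral {t..t'} (\<lambda>s. M * k t' s)"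
    proof (rule integral_norm_bound_integral[OF i3])
      show "(\<lambda>s. M * k t' s) integrable_on {t..t'}" using kt'_int by blast
      fix s assume s: "s \<in> {t..t'}"
      have "k t' s \<ge> 0" unfolding k_def by simp
      moreover have "\<bar>h s\<bar> \<le> M" using s tt by (intro hM) auto
      ultimately show "norm (k t' s * h s) \<le> M * k t' s"
        by (simp add: abs_mult) (metis mult.commute mult_right_mono)
    qed
    moreover have "integral {t..t'} (\<lambda>s. M * k t' s) = M * ((t' - t) powr \<alpha> / \<alpha>)"
      by (rule integral_unique[OF kt'_int])
    ultimately show ?thesis by simp
  qed
  have diff_int: "((\<lambda>s. M * (k t s - k t' s)) has_integral
      M * ((t powr \<alpha> - 0) / \<alpha> - (t' powr \<alpha> - (t' - t) powr \<alpha>) / \<alpha>)) {0..t}"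
    using has_integral_mult_right[OF has_integral_diff[OF kern_int[OF a(1) tt(1) order_refl] kern_int[OF a(1) tt(1) tt(2)]]]
    unfolding k_def by simp
  have diff_int2: "((\<lambda>s. M * \<bar>k t' s - k t s\<bar>) has_integral
      M * ((t powr \<alpha> - 0) / \<alpha> - (t' powr \<alpha> - (t' - t) powr \<alpha>) / \<alpha>)) {0..t}"
  proof (rule has_integral_spike[OF _ _ diff_int])
    show "negligible {t}" by simp
    fix s assume s: "s \<in> {0..t} - {t}"
    then have "0 < t - s" "t - s \<le> t' - s" using tt by auto
    then have "k t' s \<le> k t s" unfolding k_def using a by (intro powr_mono2') auto
    then show "M * \<bar>k t' s - k t s\<bar> = M * (k t s - k t' s)" by simp
  qed
  have e2: "\<bar>integral {0..t} (\<lambda>s. k t' s * h s) - integral {0..t} (\<lambda>s. k t s * h s)\<bar>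
      \<le> M * ((t powr \<alpha> - 0) / \<alpha> - (t' powr \<alpha> - (t' - t) powr \<alpha>) / \<alpha>)"
  proof -
    have "norm (integral {0..t} (\<lambda>s. k t' s * h s - k t s * h s)) \<le> integral {0..t} (\<lambda>s. M * \<bar>k t' s - k t s\<bar>)"
    proof (rule integral_norm_bound_integral[OF integrable_diff[OF i2 i4]])
      show "(\<lambda>s. M * \<bar>k t' s - k t s\<bar>) integrable_on {0..t}" using diff_int2 by blast
      fix s assume s: "s \<in> {0..t}"
      have "\<bar>h s\<bar> \<le> M" using s tt by (intro hM) auto
      then show "norm (k t' s * h s - k t s * h s) \<le> M * \<bar>k t' s - k t s\<bar>"
      proof -
        have "norm (k t' s * h s - k t s * h s) = \<bar>k t' s - k t s\<bar> * \<bar>h s\<bar>"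
          by (simp add: abs_mult flip: left_diff_distrib)
        also have "\<dots> \<le> \<bar>k t' s - k t s\<bar> * M" using \<open>\<bar>h s\<bar> \<le> M\<close> by (intro mult_left_mono) auto
        finally show ?thesis by (simp add: mult.commute)
      qed
    qed
    moreover have "integral {0..t} (\<lambda>s. M * \<bar>k t' s - k t s\<bar>) = M * ((t powr \<alpha> - 0) / \<alpha> - (t' powr \<alpha> - (t' - t) powr \<alpha>) / \<alpha>)"
      by (rule integral_unique[OF diff_int2])
    ultimately show ?thesis by (simp only: integral_diff[OF i2 i4] real_norm_def)
  qed
  have mono: "t powr \<alpha> \<le> t' powr \<alpha>" using tt a by (intro powr_mono2) auto
  have M0: "0 \<le> M" using hM[of 0] by auto
  have "\<bar>FI \<alpha> h t' - FI \<alpha> h t\<bar> \<le> 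
     \<bar>integral {0..t} (\<lambda>s. k t' s * h s) - integral {0..t} (\<lambda>s. k t s * h s)\<bar> + \<bar>integral {t..t'} (\<lambda>s. k t' s * h s)\<bar>"
    unfolding split by (simp add: FI_def k_def)
  also have "\<dots> \<le> M * ((t powr \<alpha> - 0) / \<alpha> - (t' powr \<alpha> - (t' - t) powr \<alpha>) / \<alpha>) + M * ((t' - t) powr \<alpha> / \<alpha>)"
    using e1 e2 by linarith
  also have "\<dots> \<le> 2 * M * (t' - t) powr \<alpha> / \<alpha>"
  proof -
    have "(t powr \<alpha> - 0) / \<alpha> - (t' powr \<alpha> - (t' - t) powr \<alpha>) / \<alpha> \<le> (t' - t) powr \<alpha> / \<alpha>"
      using mono a by (simp add: divide_right_mono diff_divide_distrib)
    then have "M * ((t powr \<alpha> - 0) / \<alpha> - (t' powr \<alpha> - (t' - t) powr \<alpha>) / \<alpha>) \<le> M * ((t' - t) powr \<alpha> / \<alpha>)"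
      using M0 by (intro mult_left_mono) auto
    then show ?thesis by (simp add: field_simps)
  qed
  finally show ?thesis .
qed


lemma FI_cont:
  fixes \<alpha> M :: real
  assumes a: "0 < \<alpha>" "\<alpha> \<le> 1" and hc: "continuous_on {0..} h" and hM: "\<And>s. s \<ge> 0 \<Longrightarrow> \<bar>h s\<bar> \<le> M"
  shows "continuous_on {0..} (FI \<alpha> h)"
  unfolding continuous_on_iff
proof (intro ballI allI impI)
  fix x e :: real assume x: "x \<in> {0..}" and e: "0 < e"
  have M0: "0 \<le> M" using hM[of 0] by auto
  define d where "d = (e * \<alpha> / (2 * (M + 1))) powr (1 / \<alpha>)"
  have dpos: "d > 0" unfolding d_def using e a M0 by auto
  have dpow: "d powr \<alpha> = e * \<alpha> / (2 * (M + 1))"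
    unfolding d_def using e a M0 by (simp add: powr_powr)
  have key: "\<bar>FI \<alpha> h t' - FI \<alpha> h t\<bar> < e" if "0 \<le> t" "t \<le> t'" "t' - t < d" for t t'
  proof -
    have "\<bar>FI \<alpha> h t' - FI \<alpha> h t\<bar> \<le> 2 * M * (t' - t) powr \<alpha> / \<alpha>"
      by (rule FI_holder[OF a hc hM that(1,2)])
    also have "\<dots> \<le> 2 * (M + 1) * (t' - t) powr \<alpha> / \<alpha>"
      using a by (intro divide_right_mono mult_right_mono) auto
    also have "\<dots> < 2 * (M + 1) * d powr \<alpha> / \<alpha>"
    proof -
      have "(t' - t) powr \<alpha> < d powr \<alpha>" using that a by (intro powr_less_mono2) auto
      then show ?thesis using a M0 by (intro divide_strict_right_mono mult_strict_left_mono) auto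
    qed
    also have "\<dots> = e" unfolding dpow using a M0 by (simp add: divide_simps)
    finally show ?thesis .
  qed
  show "\<exists>d>0. \<forall>x'\<in>{0..}. dist x' x < d \<longrightarrow> dist (FI \<alpha> h x') (FI \<alpha> h x) < e"
  proof (intro exI[of _ d] conjI ballI impI dpos)
    fix x' :: real assume x': "x' \<in> {0..}" "dist x' x < d"
    show "dist (FI \<alpha> h x') (FI \<alpha> h x) < e"
    proof (cases "x \<le> x'")
      case True
      then show ?thesis using key[of x x'] x x' by (simp add: dist_real_def)
    next
      case False
      then show ?thesis using key[of x' x] x x' by (simp add: dist_real_def abs_minus_commute)
    qed
  qed
qed


lemma caputo_unique:
  fixes f :: "real \<Rightarrow> 'a::euclidean_space \<Rightarrow> 'a"
  assumes a: "0 < \<alpha>" and L: "L > 0"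
    and lip: "\<And>t x y. t \<ge> 0 \<Longrightarrow> norm (f t x - f t y) \<le> L * norm (x - y)"
    and sx: "caputo_solution \<alpha> f x" and sy: "caputo_solution \<alpha> f y" and x0: "x 0 = y 0"
    and t: "t \<ge> 0"
  shows "x t = y t"
proof -
  define z where "z = (\<lambda>t. x t - y t)"
  define G where "G = Gamma \<alpha>"
  have G: "G > 0" unfolding G_def using a by (simp add: Gamma_real_pos)
  define F where "F = (\<lambda>t \<tau>. ((t - \<tau>) powr (\<alpha> - 1) / G) *\<^sub>R (f \<tau> (x \<tau>) - f \<tau> (y \<tau>)))"
  have zint: "(F t has_integral z t) {0..t}" if "t \<ge> 0" for t
  proof -
    have "((\<lambda>\<tau>. ((t - \<tau>) powr (\<alpha> - 1) / Gamma \<alpha>) *\<^sub>R f \<tau> (x \<tau>) - ((t - \<tau>) powr (\<alpha> - 1) / Gamma \<alpha>) *\<^sub>R f \<tau> (y \<tau>))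
       has_integral ((x t - x 0) - (y t - y 0))) {0..t}"
      using sx sy that unfolding caputo_solution_def by (intro has_integral_diff) auto
    then show ?thesis unfolding F_def z_def G_def using x0 by (simp add: scaleR_right_diff_distrib)
  qed
  have zc: "continuous_on {0..} z"
    using sx sy unfolding caputo_solution_def z_def by (intro continuous_intros) auto
  define h where "h = (\<alpha> * G / (2 * L)) powr (1 / \<alpha>)"
  have h: "h > 0" unfolding h_def using a G L by auto
  have hpow: "h powr \<alpha> = \<alpha> * G / (2 * L)" unfolding h_def using a G L by (simp add: powr_powr)
  have step: "\<forall>s\<in>{0..real n * h}. z s = 0" for n :: nat
  proof (induction n)
    case 0
    then show ?case using x0 by (simp add: z_def)
  next
    case (Suc n)
    define A where "A = real n * h"
    define B where "B = A + h"
    have A0: "A \<ge> 0" unfolding A_def using h by simp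
    have IH: "z s = 0" if "s \<in> {0..A}" for s using Suc.IH that unfolding A_def by auto
    have zcAB: "continuous_on {A..B} (\<lambda>s. norm (z s))"
      by (intro continuous_intros continuous_on_subset[OF zc]) (use A0 in auto)
    obtain t0 where t0: "t0 \<in> {A..B}" and t0max: "\<And>s. s \<in> {A..B} \<Longrightarrow> norm (z s) \<le> norm (z t0)"
      using continuous_attains_sup[OF compact_Icc _ zcAB] h unfolding B_def by auto
    define W where "W = norm (z t0)"
    have bound: "norm (z t) \<le> W / 2" if tAB: "t \<in> {A..B}" for t
    proof -
      have t0': "t \<ge> 0" using tAB A0 by auto
      have Fi: "F t integrable_on {0..t}" using zint[OF t0'] by blast
      have F0: "F t \<tau> = 0" if "\<tau> \<in> {0..A}" for \<tau>
        using IH[OF that] unfolding F_def z_def by simp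
      have "integral {0..A} (F t) + integral {A..t} (F t) = integral {0..t} (F t)"
        using Henstock_Kurzweil_Integration.integral_combine[OF A0 _ Fi] tAB by auto
      moreover have "integral {0..A} (F t) = 0"
        using has_integral_is_0[of "{0..A}" "F t"] F0 by (simp add: integral_unique)
      moreover have "integral {0..t} (F t) = z t" using zint[OF t0'] by (rule integral_unique)
      ultimately have zt: "z t = integral {A..t} (F t)" by simp
      have kint0: "((\<lambda>\<tau>. L * W / G * (t - \<tau>) powr (\<alpha> - 1)) has_integral L * W / G * (((t - A) powr \<alpha> - (t - t) powr \<alpha>) / \<alpha>)) {A..t}"
        by (rule has_integral_mult_right, rule kern_int[OF a]) (use tAB in auto)
      have kint: "((\<lambda>\<tau>. L * W / G * (t - \<tau>) powr (\<alpha> - 1)) has_integral L * W / G * (((t - A) powr \<alpha>) / \<alpha>)) {A..t}"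
        using kint0 by simp
      have "norm (integral {A..t} (F t)) \<le> integral {A..t} (\<lambda>\<tau>. L * W / G * (t - \<tau>) powr (\<alpha> - 1))"
      proof (rule integral_norm_bound_integral)
        show "F t integrable_on {A..t}"
          by (rule integrable_on_subinterval[OF Fi]) (use A0 in auto)
        show "(\<lambda>\<tau>. L * W / G * (t - \<tau>) powr (\<alpha> - 1)) integrable_on {A..t}" using kint by blast
        fix \<tau> assume \<tau>: "\<tau> \<in> {A..t}"
        have "norm (F t \<tau>) = (t - \<tau>) powr (\<alpha> - 1) / G * norm (f \<tau> (x \<tau>) - f \<tau> (y \<tau>))"
          unfolding F_def using G by simp
        also have "\<dots> \<le> (t - \<tau>) powr (\<alpha> - 1) / G * (L * norm (z \<tau>))"
          unfolding z_def using lip[of \<tau> "x \<tau>" "y \<tau>"] \<tau> A0 G by (intro mult_left_mono) auto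
        also have "\<dots> \<le> (t - \<tau>) powr (\<alpha> - 1) / G * (L * W)"
          unfolding W_def using t0max[of \<tau>] \<tau> tAB L G by (intro mult_left_mono) auto
        finally show "norm (F t \<tau>) \<le> L * W / G * (t - \<tau>) powr (\<alpha> - 1)" by (simp add: field_simps)
      qed
      also have "\<dots> = L * W / G * ((t - A) powr \<alpha> / \<alpha>)" by (rule integral_unique[OF kint])
      also have "\<dots> \<le> L * W / G * (h powr \<alpha> / \<alpha>)"
      proof -
        have "(t - A) powr \<alpha> \<le> h powr \<alpha>" using tAB a unfolding B_def by (intro powr_mono2) auto
        moreover have "0 \<le> L * W / G" using L G unfolding W_def by auto
        ultimately show ?thesis using a by (intro mult_left_mono divide_right_mono) auto
      qed
      also have "\<dots> = W / 2" unfolding hpow using a G L by (simp add: field_simps)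
      finally show ?thesis using zt by simp
    qed
    have "W \<le> W / 2" using bound[OF t0] unfolding W_def .
    then have W0: "W = 0" unfolding W_def by simp
    have "z s = 0" if "s \<in> {0..B}" for s
    proof (cases "s \<le> A")
      case True then show ?thesis using IH that by auto
    next
      case False
      then have "s \<in> {A..B}" using that by auto
      then show ?thesis using bound[of s] W0 by simp
    qed
    then show ?case unfolding B_def A_def by (simp add: algebra_simps)
  qed
  obtain n :: nat where "t / h \<le> real n" using real_arch_simple by blast
  then have "t \<le> real n * h" using h by (simp add: divide_le_eq)
  then have "z t = 0" using step[of n] t by auto
  then show ?thesis unfolding z_def by simp
qed


definition sat :: "real \<Rightarrow> real" where "sat u = max (-1) (min 1 u)"
definition tri :: "real \<Rightarrow> real" where "tri s = max 0 (1 - s)"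
definition hat :: "real \<Rightarrow> real" where "hat s = max 0 (min (s - 1) (3 - s))"

lemma sat_lip: "\<bar>sat a - sat b\<bar> \<le> \<bar>a - b\<bar>"
  unfolding sat_def by (simp add: max_def min_def)

lemma sat_neg: "sat (- a) = - sat a"
  unfolding sat_def by (simp add: max_def min_def)

lemma sat_one: "a \<ge> 1 \<Longrightarrow> sat a = 1"
  unfolding sat_def by simp

lemma cont_sat [continuous_intros]: "continuous_on S g \<Longrightarrow> continuous_on S (\<lambda>x. sat (g x))"
  unfolding sat_def by (intro continuous_intros)

lemma cont_tri [continuous_intros]: "continuous_on S g \<Longrightarrow> continuous_on S (\<lambda>x. tri (g x))"
  unfolding tri_def by (intro continuous_intros)

lemma cont_hat [continuous_intros]: "continuous_on S g \<Longrightarrow> continuous_on S (\<lambda>x. hat (g x))"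
  unfolding hat_def by (intro continuous_intros)

lemma lin_int:
  fixes a b p q :: real
  assumes "a \<le> b"
  shows "((\<lambda>s. p * s + q) has_integral (p * (b\<^sup>2 - a\<^sup>2) / 2 + q * (b - a))) {a..b}"
proof -
  have "((\<lambda>s. p * s + q) has_integral ((\<lambda>s. p * s\<^sup>2 / 2 + q * s) b - (\<lambda>s. p * s\<^sup>2 / 2 + q * s) a)) {a..b}"
    by (rule fundamental_theorem_of_calculus[OF assms])
       (auto intro!: derivative_eq_intros simp flip: has_real_derivative_iff_has_vector_derivative)
  then show ?thesis by (simp add: algebra_simps diff_divide_distrib)
qed

lemma tri_int: assumes "1 \<le> s" shows "(tri has_integral 1/2) {0..s}"
proof -
  have "(tri has_integral (-1*(1\<^sup>2-0\<^sup>2)/2 + 1*(1-0))) {0..1}"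
    by (rule has_integral_eq[OF _ lin_int]) (auto simp: tri_def)
  then have "(tri has_integral 1/2) {0..1}" by simp
  moreover have "(tri has_integral 0) {1..s}"
    by (rule has_integral_is_0) (auto simp: tri_def)
  ultimately show ?thesis using has_integral_combine[of 0 1 s tri "1/2" 0] assms by simp
qed

lemma hat_int: "(hat has_integral 1) {0..5}"
proof -
  have "(hat has_integral 0) {0..1}"
    by (rule has_integral_is_0) (auto simp: hat_def)
  moreover have "(hat has_integral (1*(2\<^sup>2-1\<^sup>2)/2 + (-1)*(2-1))) {1..2}"
    by (rule has_integral_eq[OF _ lin_int]) (auto simp: hat_def)
  then have "(hat has_integral 1/2) {1..2}" by simp
  moreover have "(hat has_integral ((-1)*(3\<^sup>2-2\<^sup>2)/2 + 3*(3-2))) {2..3}"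
    by (rule has_integral_eq[OF _ lin_int]) (auto simp: hat_def)
  then have "(hat has_integral 1/2) {2..3}" by simp
  moreover have "(hat has_integral 0) {3..5}"
    by (rule has_integral_is_0) (auto simp: hat_def)
  ultimately show ?thesis
    using has_integral_combine[of 0 1 2 hat 0 "1/2"] has_integral_combine[of 0 2 3 hat "1/2" "1/2"]
      has_integral_combine[of 0 3 5 hat 1 0] by simp
qed


lemma FI_int:
  assumes "0 < \<alpha>" "0 \<le> t" "continuous_on {0..t} h"
  shows "((\<lambda>s. (t - s) powr (\<alpha> - 1) * h s) has_integral FI \<alpha> h t) {0..t}"
  unfolding FI_def using kern_prod_integrable[OF assms(1,2) order_refl assms(3)] by (rule integrable_integral)

lemma tri_nonneg: "tri s \<ge> 0" unfolding tri_def by simp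
lemma hat_nonneg: "hat s \<ge> 0" unfolding hat_def by simp
lemma tri_le1: "s \<ge> 0 \<Longrightarrow> tri s \<le> 1" unfolding tri_def by simp
lemma hat_le1: "hat s \<le> 1" unfolding hat_def by simp
lemma tri_cont: "continuous_on S tri" using cont_tri[OF continuous_on_id] by simp
lemma hat_cont: "continuous_on S hat" using cont_hat[OF continuous_on_id] by simp

lemma FI_hat_small: assumes "0 < \<alpha>" "0 \<le> t" "t \<le> 1" shows "FI \<alpha> hat t = 0"
  unfolding FI_def using assms by (intro integral_unique has_integral_is_0) (auto simp: hat_def)

lemma FI_hat_5: assumes "0 < \<alpha>" "\<alpha> \<le> 1" shows "FI \<alpha> hat 5 \<ge> 4 powr (\<alpha> - 1)"
proof -
  have "4 powr (\<alpha> - 1) * 1 \<le> FI \<alpha> hat 5"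
  proof (rule has_integral_le[OF has_integral_mult_right[OF hat_int] FI_int[OF assms(1) _ hat_cont]])
    fix s :: real assume s: "s \<in> {0..5}"
    show "4 powr (\<alpha> - 1) * hat s \<le> (5 - s) powr (\<alpha> - 1) * hat s"
    proof (cases "1 \<le> s \<and> s < 5")
      case True
      then have "4 powr (\<alpha> - 1) \<le> (5 - s) powr (\<alpha> - 1)" using assms by (intro powr_mono2') auto
      then show ?thesis by (intro mult_right_mono hat_nonneg)
    next
      case False
      then have "hat s = 0" using s by (auto simp: hat_def)
      then show ?thesis by simp
    qed
  qed simp
  then show ?thesis by simp
qed

lemma FI_tri_lower: assumes "0 < \<alpha>" "\<alpha> \<le> 1" "1 \<le> t" "t \<le> 3" shows "FI \<alpha> tri t \<ge> 3 powr (\<alpha> - 1) / 2"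
proof -
  have "3 powr (\<alpha> - 1) * (1/2) \<le> FI \<alpha> tri t"
  proof (rule has_integral_le[OF has_integral_mult_right[OF tri_int] FI_int[OF assms(1) _ tri_cont]])
    fix s :: real assume s: "s \<in> {0..t}"
    show "3 powr (\<alpha> - 1) * tri s \<le> (t - s) powr (\<alpha> - 1) * tri s"
    proof (cases "s < t")
      case True
      then have "3 powr (\<alpha> - 1) \<le> (t - s) powr (\<alpha> - 1)" using assms s by (intro powr_mono2') auto
      then show ?thesis by (intro mult_right_mono tri_nonneg)
    next
      case False
      then have "tri s = 0" using s assms by (auto simp: tri_def)
      then show ?thesis by simp
    qed
  qed (use assms in auto)
  then show ?thesis by simp
qed

lemma FI_tri_5: assumes "0 < \<alpha>" "\<alpha> \<le> 1" shows "FI \<alpha> tri 5 \<le> 4 powr (\<alpha> - 1) / 2"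
proof -
  have "FI \<alpha> tri 5 \<le> 4 powr (\<alpha> - 1) * (1/2)"
  proof (rule has_integral_le[OF FI_int[OF assms(1) _ tri_cont] has_integral_mult_right[OF tri_int]])
    fix s :: real assume s: "s \<in> {0..5}"
    show "(5 - s) powr (\<alpha> - 1) * tri s \<le> 4 powr (\<alpha> - 1) * tri s"
    proof (cases "s \<le> 1")
      case True
      then have "(5 - s) powr (\<alpha> - 1) \<le> 4 powr (\<alpha> - 1)" using assms s by (intro powr_mono2') auto
      then show ?thesis by (intro mult_right_mono tri_nonneg)
    next
      case False
      then have "tri s = 0" using s assms by (auto simp: tri_def)
      then show ?thesis by simp
    qed
  qed (use assms in auto)
  then show ?thesis by simp
qed


lemma evo_val:
  fixes f :: "real \<Rightarrow> 'a::euclidean_space \<Rightarrow> 'a"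
  assumes a: "0 < \<alpha>" and L: "L > 0"
    and lip: "\<And>t x y. t \<ge> 0 \<Longrightarrow> norm (f t x - f t y) \<le> L * norm (x - y)"
    and sx: "caputo_solution \<alpha> f x" and t: "t \<ge> 0"
  shows "evolution_map \<alpha> f t (x 0) = x t"
  unfolding evolution_map_def
proof (rule the_equality)
  show "\<exists>x'. caputo_solution \<alpha> f x' \<and> x' 0 = x 0 \<and> x' t = x t" using sx by blast
next
  fix y assume "\<exists>x'. caputo_solution \<alpha> f x' \<and> x' 0 = x 0 \<and> x' t = y"
  then obtain x' where "caputo_solution \<alpha> f x'" "x' 0 = x 0" "x' t = y" by blast
  then show "y = x t" using caputo_unique[OF a L lip _ sx _ t, of x'] by auto
qed

lemma comp2_i: "i \<noteq> j \<Longrightarrow> (u *\<^sub>R axis i (1::real) + v *\<^sub>R axis j 1) $ i = u"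
  by (simp add: axis_def)
lemma comp2_j: "i \<noteq> j \<Longrightarrow> (u *\<^sub>R axis i (1::real) + v *\<^sub>R axis j 1) $ j = v"
  by (simp add: axis_def)

lemma FI_0: "FI \<alpha> h 0 = 0" by (simp add: FI_def)


theorem mainTheorem11:
  fixes \<alpha> :: real
  assumes "0 < \<alpha>" and "\<alpha> < 1" and "CARD('d::finite) \<ge> 2"
  shows "\<exists>f :: real \<Rightarrow> real^'d \<Rightarrow> real^'d.
           continuous_on ({0..} \<times> UNIV) (\<lambda>(t, x). f t x) \<and>
           (\<exists>L. \<forall>t\<ge>0. \<forall>x y. norm (f t x - f t y) \<le> L * norm (x - y)) \<and>
           \<not> (\<exists>\<phi>. two_param_flow \<phi> \<and> (\<forall>t\<ge>0. \<phi> 0 t = evolution_map \<alpha> f t))"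
proof -
  have a: "0 < \<alpha>" "\<alpha> \<le> 1" using assms by auto
  have "\<not> (\<forall>a\<in>(UNIV::'d set). \<forall>b\<in>UNIV. a = b)"
    using assms(3) card_le_Suc0_iff_eq[of "UNIV::'d set"] by auto
  then obtain i j :: 'd where ij: "i \<noteq> j" by blast
  define G where "G = Gamma \<alpha>"
  have G: "G > 0" unfolding G_def using a by (simp add: Gamma_real_pos)
  have p34: "4 powr (\<alpha> - 1) < 3 powr (\<alpha> - 1)" using assms by (intro powr_less_mono2_neg) auto
  have p4: "4 powr (\<alpha> - 1) > 0" by simp
  define \<nu> where "\<nu> = G / 4 powr (\<alpha> - 1)"
  define \<mu> where "\<mu> = 2 * G / (3 powr (\<alpha> - 1) - 4 powr (\<alpha> - 1))"
  have \<nu>: "\<nu> > 0" unfolding \<nu>_def using G by simp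
  have \<mu>: "\<mu> > 0" unfolding \<mu>_def using G p34 by simp
  define f :: "real \<Rightarrow> real^'d \<Rightarrow> real^'d" where
    "f = (\<lambda>t y. (- \<nu> * hat t * sat (y$j)) *\<^sub>R axis i 1 + (\<mu> * tri t * sat (y$i)) *\<^sub>R axis j 1)"
  define a1 where "a1 = \<nu> * FI \<alpha> hat 5 / G"
  define a2 where "a2 = - \<mu> * FI \<alpha> tri 5 / G"
  define A :: "real \<Rightarrow> real^'d" where
    "A = (\<lambda>t. (a1 - \<nu> * FI \<alpha> hat t / G) *\<^sub>R axis i 1 + (a2 + \<mu> * FI \<alpha> tri t / G) *\<^sub>R axis j 1)"
  have Ai: "A t $ i = a1 - \<nu> * FI \<alpha> hat t / G" for t unfolding A_def using ij by (rule comp2_i)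
  have Aj: "A t $ j = a2 + \<mu> * FI \<alpha> tri t / G" for t unfolding A_def using ij by (rule comp2_j)
  have a1: "a1 \<ge> 1"
  proof -
    have "\<nu> * 4 powr (\<alpha> - 1) / G \<le> a1"
      unfolding a1_def using FI_hat_5[OF a] \<nu> G by (intro divide_right_mono mult_left_mono) auto
    moreover have "\<nu> * 4 powr (\<alpha> - 1) / G = 1" unfolding \<nu>_def using G by simp
    ultimately show ?thesis by simp
  qed
  have a2: "A s $ j \<ge> 1" if "1 \<le> s" "s \<le> 3" for s
  proof -
    have "A s $ j = \<mu> / G * (FI \<alpha> tri s - FI \<alpha> tri 5)" unfolding Aj a2_def using G by (simp add: field_simps)
    moreover have "FI \<alpha> tri s - FI \<alpha> tri 5 \<ge> (3 powr (\<alpha> - 1) - 4 powr (\<alpha> - 1)) / 2"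
      using FI_tri_lower[OF a that] FI_tri_5[OF a] by (simp add: diff_divide_distrib)
    moreover have "\<mu> / G * ((3 powr (\<alpha> - 1) - 4 powr (\<alpha> - 1)) / 2) = 1"
      unfolding \<mu>_def using G p34 by simp
    ultimately show ?thesis using \<mu> G
      by (metis (no_types, lifting) divide_pos_pos less_eq_real_def mult_left_mono)
  qed
  have regime: "f s (A s) = (- \<nu> * hat s) *\<^sub>R axis i 1 + (\<mu> * tri s) *\<^sub>R axis j 1" if s: "s \<ge> 0" for s
  proof -
    have h1: "hat s * sat (A s $ j) = hat s"
    proof (cases "hat s = 0")
      case False
      then have "1 \<le> s" "s \<le> 3" by (auto simp: hat_def)
      then show ?thesis using a2 sat_one by simp
    qed simp
    have h2: "tri s * sat (A s $ i) = tri s"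
    proof (cases "tri s = 0")
      case False
      then have "s \<le> 1" by (auto simp: tri_def)
      then have "A s $ i = a1" unfolding Ai using FI_hat_small[OF a(1) s] by simp
      then show ?thesis using a1 sat_one by simp
    qed simp
    show ?thesis by (simp only: f_def mult.assoc h1 h2)
  qed
  have f_odd: "f t (- y) = - f t y" for t y unfolding f_def by (simp add: sat_neg)
  have A0: "A 0 = a1 *\<^sub>R axis i 1 + a2 *\<^sub>R axis j 1" unfolding A_def by (simp add: FI_0)
  have A5: "A 5 = 0" unfolding A_def a1_def a2_def by simp
  have contA: "continuous_on {0..} A"
  proof -
    have "continuous_on {0..} (FI \<alpha> hat)" using FI_cont[OF a hat_cont, of 1] hat_le1 hat_nonneg by auto
    moreover have "continuous_on {0..} (FI \<alpha> tri)" using FI_cont[OF a tri_cont, of 1] tri_le1 tri_nonneg by auto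
    ultimately show ?thesis unfolding A_def using G by (intro continuous_intros) auto
  qed
  have intA: "((\<lambda>\<tau>. ((t - \<tau>) powr (\<alpha> - 1) / Gamma \<alpha>) *\<^sub>R f \<tau> (A \<tau>)) has_integral (A t - A 0)) {0..t}"
    if t: "t \<ge> 0" for t
  proof -
    have h1: "((\<lambda>s. (-\<nu> / G) * ((t - s) powr (\<alpha> - 1) * hat s)) has_integral (-\<nu> / G) * FI \<alpha> hat t) {0..t}"
      by (rule has_integral_mult_right, rule FI_int[OF a(1) t hat_cont])
    have h2: "((\<lambda>s. (\<mu> / G) * ((t - s) powr (\<alpha> - 1) * tri s)) has_integral (\<mu> / G) * FI \<alpha> tri t) {0..t}"
      by (rule has_integral_mult_right, rule FI_int[OF a(1) t tri_cont])
    have h3: "((\<lambda>s. ((-\<nu> / G) * ((t - s) powr (\<alpha> - 1) * hat s)) *\<^sub>R axis i 1 + ((\<mu> / G) * ((t - s) powr (\<alpha> - 1) * tri s)) *\<^sub>R axis j 1)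
       has_integral ((-\<nu> / G) * FI \<alpha> hat t) *\<^sub>R axis i 1 + ((\<mu> / G) * FI \<alpha> tri t) *\<^sub>R axis j 1) {0..t}"
      by (intro has_integral_add has_integral_scaleR_left h1 h2)
    have eqv: "A t - A 0 = ((-\<nu> / G) * FI \<alpha> hat t) *\<^sub>R axis i 1 + ((\<mu> / G) * FI \<alpha> tri t) *\<^sub>R axis j 1"
      unfolding A0 unfolding A_def by (simp add: algebra_simps)
    show ?thesis unfolding eqv
    proof (rule has_integral_eq[OF _ h3])
      fix s assume s: "s \<in> {0..t}"
      show "((-\<nu> / G) * ((t - s) powr (\<alpha> - 1) * hat s)) *\<^sub>R axis i 1 + ((\<mu> / G) * ((t - s) powr (\<alpha> - 1) * tri s)) *\<^sub>R axis j 1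
          = ((t - s) powr (\<alpha> - 1) / Gamma \<alpha>) *\<^sub>R f s (A s)"
      proof -
        have r: "f s (A s) = (- \<nu> * hat s) *\<^sub>R axis i 1 + (\<mu> * tri s) *\<^sub>R axis j 1"
          using regime s by auto
        show ?thesis unfolding r by (simp add: G_def scaleR_add_right scaleR_scaleR field_simps)
      qed
    qed
  qed
  have solA: "caputo_solution \<alpha> f A"
    unfolding caputo_solution_def using contA intA by blast
  have solB: "caputo_solution \<alpha> f (\<lambda>t. - A t)"
    unfolding caputo_solution_def
  proof (intro conjI allI impI)
    show "continuous_on {0..} (\<lambda>t. - A t)" using contA by (intro continuous_intros)
    fix t :: real assume t: "t \<ge> 0"
    show "((\<lambda>\<tau>. ((t - \<tau>) powr (\<alpha> - 1) / Gamma \<alpha>) *\<^sub>R f \<tau> (- A \<tau>)) has_integral (- A t - - A 0)) {0..t}"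
      using has_integral_neg[OF intA[OF t]] by (simp add: f_odd)
  qed
  define L where "L = \<mu> + \<nu>"
  have L: "L > 0" unfolding L_def using \<mu> \<nu> by simp
  have lip: "norm (f t x - f t y) \<le> L * norm (x - y)" if t: "t \<ge> 0" for t x y
  proof -
    have "f t x - f t y = (- \<nu> * hat t * (sat (x$j) - sat (y$j))) *\<^sub>R axis i 1 + (\<mu> * tri t * (sat (x$i) - sat (y$i))) *\<^sub>R axis j 1"
      unfolding f_def by (simp add: algebra_simps)
    then have "norm (f t x - f t y) \<le> \<bar>\<nu> * hat t * (sat (x$j) - sat (y$j))\<bar> + \<bar>\<mu> * tri t * (sat (x$i) - sat (y$i))\<bar>"
      using norm_triangle_ineq[of "(- \<nu> * hat t * (sat (x$j) - sat (y$j))) *\<^sub>R axis i (1::real)" "(\<mu> * tri t * (sat (x$i) - sat (y$i))) *\<^sub>R axis j 1"]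
      by (simp add: abs_mult)
    also have "\<dots> \<le> \<nu> * norm (x - y) + \<mu> * norm (x - y)"
    proof (rule add_mono)
      have "\<bar>\<nu> * hat t * (sat (x$j) - sat (y$j))\<bar> = \<nu> * hat t * \<bar>sat (x$j) - sat (y$j)\<bar>"
        using \<nu> hat_nonneg by (simp add: abs_mult)
      also have "\<dots> \<le> \<nu> * 1 * \<bar>(x - y)$j\<bar>"
        using \<nu> hat_nonneg hat_le1 sat_lip by (intro mult_mono) auto
      also have "\<dots> \<le> \<nu> * norm (x - y)" using \<nu> component_le_norm_cart[of "x - y" j] by (simp add: mult_left_mono del: vector_minus_component)
      finally show "\<bar>\<nu> * hat t * (sat (x$j) - sat (y$j))\<bar> \<le> \<nu> * norm (x - y)" .
      have "\<bar>\<mu> * tri t * (sat (x$i) - sat (y$i))\<bar> = \<mu> * tri t * \<bar>sat (x$i) - sat (y$i)\<bar>"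
        using \<mu> tri_nonneg by (simp add: abs_mult)
      also have "\<dots> \<le> \<mu> * 1 * \<bar>(x - y)$i\<bar>"
        using \<mu> tri_nonneg tri_le1[OF t] sat_lip by (intro mult_mono) auto
      also have "\<dots> \<le> \<mu> * norm (x - y)" using \<mu> component_le_norm_cart[of "x - y" i] by (simp add: mult_left_mono del: vector_minus_component)
      finally show "\<bar>\<mu> * tri t * (sat (x$i) - sat (y$i))\<bar> \<le> \<mu> * norm (x - y)" .
    qed
    finally show ?thesis unfolding L_def by (simp add: algebra_simps)
  qed
  have contf: "continuous_on ({0..} \<times> UNIV) (\<lambda>(t, x). f t x)"
  proof -
    have "(\<lambda>(t, x). f t x) = (\<lambda>p. f (fst p) (snd p))" by auto
    moreover have "continuous_on ({0..} \<times> UNIV) (\<lambda>p. f (fst p) (snd p))"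
      unfolding f_def by (intro continuous_intros)
    ultimately show ?thesis by simp
  qed
  have noflow: "\<not> (\<exists>\<phi>. two_param_flow \<phi> \<and> (\<forall>t\<ge>0. \<phi> 0 t = evolution_map \<alpha> f t))"
  proof
    assume "\<exists>\<phi>. two_param_flow \<phi> \<and> (\<forall>t\<ge>0. \<phi> 0 t = evolution_map \<alpha> f t)"
    then obtain \<phi> where fl: "two_param_flow \<phi>" and ev: "\<And>t. t \<ge> 0 \<Longrightarrow> \<phi> 0 t = evolution_map \<alpha> f t" by blast
    obtain g where hom: "homeomorphism UNIV UNIV (\<phi> 0 5) g"
      using fl unfolding two_param_flow_def by force
    have inv: "g (\<phi> 0 5 x) = x" for x using hom unfolding homeomorphism_def by auto
    have e1: "\<phi> 0 5 (A 0) = 0"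
      using ev[of 5] evo_val[OF a(1) L lip solA, of 5] A5 by simp
    have e2: "\<phi> 0 5 (- A 0) = 0"
      using ev[of 5] evo_val[OF a(1) L lip solB, of 5] A5 by simp
    have "A 0 = - A 0" using inv[of "A 0"] inv[of "- A 0"] e1 e2 by simp
    then have "A 0 $ i = 0" by (metis add.inverse_neutral equal_neg_zero vector_uminus_component)
    then show False using Ai[of 0] a1 by (simp add: FI_0)
  qed
  show ?thesis
    using contf lip noflow by blast
qed

end
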